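(* Let $G$ be a finite solvable group, $N$ a minimal normal subgroup of $G$, and $a\in G$. Write $\bar G=G/N$, $\bar a=aN$, and $C_N=\{g\in G\mid [a,g]\in N\}$. Suppose that $$\eta\big(\bar a^{\bar G}(\bar a^{-1})^{\bar G}\big)=\eta\big(a^G(a^{-1})^G\big).$$ Then $N\subseteq \mathbf{C}_G(a)=C_N$. In particular $$\operatorname{dl}\big(G/\operatorname{core}_G(\mathbf{C}_G(a))\big)=\operatorname{dl}\big(\bar G/\operatorname{core}_{\bar G}(\mathbf{C}_{\bar G}(\bar a))\big).$$
   Context: $[x,g]=x^{-1}g^{-1}xg$, $x^g=g^{-1}xg$, $x^L=\{x^l\mid l\in L\}$, and $XY=\{xy\mid x\in X,y\in Y\}$. For a nonempty subset $X$ of a group $L$ that is invariant under conjugation by $L$, $\eta(X)$ is the number of distinct conjugacy classes of $L$ whose union is $X$. For a subgroup $K$ of $L$, $\operatorname{core}_L(K)=\bigcap_{l\in L}l^{-1}Kl$. $\operatorname{dl}$ denotes derived length. *)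

theory Defs
  imports "HOL-Algebra.Algebra"
begin

definition commutator :: "('a, 'b) monoid_scheme \<Rightarrow> 'a \<Rightarrow> 'a \<Rightarrow> 'a" where
  "commutator G x g = inv\<^bsub>G\<^esub> x \<otimes>\<^bsub>G\<^esub> inv\<^bsub>G\<^esub> g \<otimes>\<^bsub>G\<^esub> x \<otimes>\<^bsub>G\<^esub> g"

definition conjclass :: "('a, 'b) monoid_scheme \<Rightarrow> 'a \<Rightarrow> 'a set" where
  "conjclass G x = {inv\<^bsub>G\<^esub> g \<otimes>\<^bsub>G\<^esub> x \<otimes>\<^bsub>G\<^esub> g | g. g \<in> carrier G}"

definition eta_count :: "('a, 'b) monoid_scheme \<Rightarrow> 'a set \<Rightarrow> nat" where
  "eta_count G S = card {conjclass G x | x. x \<in> S}"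

definition centralizer :: "('a, 'b) monoid_scheme \<Rightarrow> 'a \<Rightarrow> 'a set" where
  "centralizer G a = {g \<in> carrier G. a \<otimes>\<^bsub>G\<^esub> g = g \<otimes>\<^bsub>G\<^esub> a}"

definition core :: "('a, 'b) monoid_scheme \<Rightarrow> 'a set \<Rightarrow> 'a set" where
  "core G K = (\<Inter>g \<in> carrier G. (inv\<^bsub>G\<^esub> g) <#\<^bsub>G\<^esub> K #>\<^bsub>G\<^esub> g)"

definition derived_length :: "('a, 'b) monoid_scheme \<Rightarrow> nat" where
  "derived_length G = (LEAST n. (derived G ^^ n) (carrier G) = {\<one>\<^bsub>G\<^esub>})"

definition minimal_normal :: "'a set \<Rightarrow> ('a, 'b) monoid_scheme \<Rightarrow> bool" where
  "minimal_normal N G \<longleftrightarrow> N \<lhd> G \<and> N \<noteq> {\<one>\<^bsub>G\<^esub>} \<and>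
     (\<forall>M. M \<lhd> G \<and> M \<subseteq> N \<longrightarrow> M = {\<one>\<^bsub>G\<^esub>} \<or> M = N)"

end

theory Submission
  imports Defs
begin


lemma dl_iso:
  assumes A: "group A" and B: "group B" and f: "f \<in> iso A B"
  shows "derived_length A = derived_length B"
proof -
  have gh: "group_hom A B f" using A B f by (simp add: group_hom_def group_hom_axioms_def iso_def)
  have surj: "f ` carrier A = carrier B" and inj: "inj_on f (carrier A)"
    using f by (auto simp: iso_def bij_betw_def)
  have eq: "((derived B ^^ n) (carrier B) = {\<one>\<^bsub>B\<^esub>}) \<longleftrightarrow> ((derived A ^^ n) (carrier A) = {\<one>\<^bsub>A\<^esub>})" for n
  proof -
    let ?X = "(derived A ^^ n) (carrier A)"
    have X: "?X \<subseteq> carrier A" by (simp add: A group.exp_of_derived_in_carrier)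
    have one: "\<one>\<^bsub>A\<^esub> \<in> ?X"
      using group.exp_of_derived_is_subgroup[OF A group.subgroup_self[OF A]] subgroup.one_closed by blast
    have img: "(derived B ^^ n) (carrier B) = f ` ?X"
      using group_hom.exp_of_derived_img[OF gh, of "carrier A" n] surj by simp
    have f1: "f \<one>\<^bsub>A\<^esub> = \<one>\<^bsub>B\<^esub>" using gh group_hom.hom_one by blast
    show ?thesis
    proof
      assume "(derived B ^^ n) (carrier B) = {\<one>\<^bsub>B\<^esub>}"
      hence "f ` ?X = {f \<one>\<^bsub>A\<^esub>}" using img f1 by simp
      moreover have "inj_on f ?X" using inj X inj_on_subset by blast
      ultimately have "x = \<one>\<^bsub>A\<^esub>" if "x \<in> ?X" for x
        using that one by (metis imageI inj_onD singletonD)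
      thus "?X = {\<one>\<^bsub>A\<^esub>}" using one by blast
    next
      assume "?X = {\<one>\<^bsub>A\<^esub>}" thus "(derived B ^^ n) (carrier B) = {\<one>\<^bsub>B\<^esub>}" using img f1 by simp
    qed
  qed
  show ?thesis unfolding derived_length_def using eq by simp
qed

lemma core_mem:
  fixes G :: "('a, 'b) monoid_scheme" (structure)
  assumes HH: "group G" and S: "S \<subseteq> carrier G" and g: "g \<in> carrier G"
  shows "g \<in> core G S \<longleftrightarrow> (\<forall>y\<in>carrier G. y \<otimes>\<^bsub>G\<^esub> g \<otimes>\<^bsub>G\<^esub> inv\<^bsub>G\<^esub> y \<in> S)"
proof -
  interpret group G by fact
  have "g \<in> inv y <# S #> y \<longleftrightarrow> y \<otimes> g \<otimes> inv y \<in> S" if y: "y \<in> carrier G" for y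
  proof
    assume "g \<in> inv y <# S #> y"
    then obtain s where s: "s \<in> S" "g = inv y \<otimes> s \<otimes> y" unfolding l_coset_def r_coset_def by auto
    have sc: "s \<in> carrier G" using s S by auto
    have "y \<otimes> g \<otimes> inv y = s" using s(2) sc y by (simp add: m_assoc[symmetric], simp add: m_assoc)
    thus "y \<otimes> g \<otimes> inv y \<in> S" using s by simp
  next
    assume a: "y \<otimes> g \<otimes> inv y \<in> S"
    have "g = inv y \<otimes> (y \<otimes> g \<otimes> inv y) \<otimes> y" using y g by (simp add: m_assoc, simp add: m_assoc[symmetric])
    thus "g \<in> inv y <# S #> y" using a unfolding l_coset_def r_coset_def by blast
  qed
  thus ?thesis unfolding core_def by auto
qed

lemma core_sub:
  fixes G :: "('a, 'b) monoid_scheme" (structure)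
  assumes HH: "group G" and S: "S \<subseteq> carrier G"
  shows "core G S \<subseteq> carrier G"
proof -
  interpret group G by fact
  have "inv \<one> <# S #> \<one> \<subseteq> carrier G" using S unfolding l_coset_def r_coset_def by auto
  thus ?thesis unfolding core_def by blast
qed

lemma grp_cancel:
  fixes G :: "('a, 'b) monoid_scheme" (structure)
  assumes "group G" "u \<in> carrier G" "v \<in> carrier G"
  shows "inv u \<otimes> (u \<otimes> v) = v" "u \<otimes> (inv u \<otimes> v) = v"
proof -
  interpret group G by fact
  show "inv u \<otimes> (u \<otimes> v) = v" using assms(2,3) by (simp add: m_assoc[symmetric])
  show "u \<otimes> (inv u \<otimes> v) = v" using assms(2,3) by (simp add: m_assoc[symmetric])
qed

lemma core_normal:
  fixes G :: "('a, 'b) monoid_scheme" (structure)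
  assumes HH: "group G" and S: "subgroup S G"
  shows "core G S \<lhd> G"
proof -
  interpret group G by fact
  have Ssub: "S \<subseteq> carrier G" using S subgroup.subset by blast
  note cs = core_sub[OF HH Ssub]
  note cm = core_mem[OF HH Ssub]
  have memI: "u \<in> core G S" if "u \<in> carrier G" "\<And>y. y \<in> carrier G \<Longrightarrow> y \<otimes> u \<otimes> inv y \<in> S" for u
    using cm[OF that(1)] that(2) by blast
  have memD: "y \<otimes> u \<otimes> inv y \<in> S" if "u \<in> core G S" "y \<in> carrier G" for u y
  proof -
    have "u \<in> carrier G" using that(1) cs by blast
    thus ?thesis using cm that by blast
  qed
  have sg: "subgroup (core G S) G"
  proof (rule subgroupI)
    show "core G S \<subseteq> carrier G" by fact
    have "\<one> \<in> core G S"
      by (rule memI) (simp_all add: subgroup.one_closed[OF S])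
    thus "core G S \<noteq> {}" by blast
  next
    fix x assume x: "x \<in> core G S"
    have xc: "x \<in> carrier G" using x cs by blast
    show "inv x \<in> core G S"
    proof (rule memI)
      show "inv x \<in> carrier G" using xc by simp
      fix y assume y: "y \<in> carrier G"
      have "inv (y \<otimes> x \<otimes> inv y) \<in> S" by (rule subgroup.m_inv_closed[OF S memD[OF x y]])
      moreover have "inv (y \<otimes> x \<otimes> inv y) = y \<otimes> inv x \<otimes> inv y"
      proof (rule inv_equality)
        show "y \<otimes> inv x \<otimes> inv y \<otimes> (y \<otimes> x \<otimes> inv y) = \<one>"
          using y xc by (simp add: m_assoc grp_cancel[OF HH])
      qed (use y xc in simp_all)
      ultimately show "y \<otimes> inv x \<otimes> inv y \<in> S" by simp
    qed
  next
    fix x z assume x: "x \<in> core G S" and z: "z \<in> core G S"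
    have xc: "x \<in> carrier G" using x cs by blast
    have zc: "z \<in> carrier G" using z cs by blast
    show "x \<otimes> z \<in> core G S"
    proof (rule memI)
      show "x \<otimes> z \<in> carrier G" using xc zc by simp
      fix y assume y: "y \<in> carrier G"
      have "(y \<otimes> x \<otimes> inv y) \<otimes> (y \<otimes> z \<otimes> inv y) \<in> S"
        by (rule subgroup.m_closed[OF S memD[OF x y] memD[OF z y]])
      moreover have "(y \<otimes> x \<otimes> inv y) \<otimes> (y \<otimes> z \<otimes> inv y) = y \<otimes> (x \<otimes> z) \<otimes> inv y" using y xc zc
        by (simp add: m_assoc grp_cancel[OF HH])
      ultimately show "y \<otimes> (x \<otimes> z) \<otimes> inv y \<in> S" by simp
    qed
  qed
  show ?thesis
  proof (rule normal_invI[OF sg])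
    fix x h assume x: "x \<in> carrier G" and h: "h \<in> core G S"
    have hc: "h \<in> carrier G" using h cs by blast
    show "x \<otimes> h \<otimes> inv x \<in> core G S"
    proof (rule memI)
      show "x \<otimes> h \<otimes> inv x \<in> carrier G" using x hc by simp
      fix y assume y: "y \<in> carrier G"
      have "(y \<otimes> x) \<otimes> h \<otimes> inv (y \<otimes> x) \<in> S" using memD[OF h, of "y \<otimes> x"] x y by simp
      moreover have "(y \<otimes> x) \<otimes> h \<otimes> inv (y \<otimes> x) = y \<otimes> (x \<otimes> h \<otimes> inv x) \<otimes> inv y"
        using x y hc by (simp add: inv_mult_group m_assoc)
      ultimately show "y \<otimes> (x \<otimes> h \<otimes> inv x) \<otimes> inv y \<in> S" by simp
    qed
  qed
qed

lemma centralizer_subgroup: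
  fixes G :: "('a, 'b) monoid_scheme" (structure)
  assumes HH: "group G" and a: "a \<in> carrier G"
  shows "subgroup (centralizer G a) G"
proof -
  interpret group G by fact
  show ?thesis
  proof (rule subgroupI)
    show "centralizer G a \<subseteq> carrier G" unfolding centralizer_def by auto
    show "centralizer G a \<noteq> {}" using a unfolding centralizer_def by auto
    fix x assume x: "x \<in> centralizer G a"
    hence xc: "x \<in> carrier G" and xa: "a \<otimes> x = x \<otimes> a" unfolding centralizer_def by auto
    have "a \<otimes> inv x = inv x \<otimes> a"
    proof -
      have "x \<otimes> (a \<otimes> inv x) = (x \<otimes> a) \<otimes> inv x" using xc a by (simp add: m_assoc)
      also have "\<dots> = (a \<otimes> x) \<otimes> inv x" by (rule arg_cong[where f="\<lambda>t. t \<otimes> inv x"], rule xa[symmetric])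
      also have "\<dots> = a" using xc a by (simp add: m_assoc)
      finally have "a = x \<otimes> (a \<otimes> inv x)" by simp
      thus ?thesis using inv_solve_left[of "a \<otimes> inv x" x a] xc a by simp
    qed
    thus "inv x \<in> centralizer G a" using xc unfolding centralizer_def by auto
    fix z assume "z \<in> centralizer G a"
    hence zc: "z \<in> carrier G" and za: "a \<otimes> z = z \<otimes> a" unfolding centralizer_def by auto
    have "a \<otimes> (x \<otimes> z) = x \<otimes> z \<otimes> a"
    proof -
      have "a \<otimes> (x \<otimes> z) = (a \<otimes> x) \<otimes> z" using a xc zc by (simp add: m_assoc)
      also have "\<dots> = x \<otimes> (a \<otimes> z)" using a xc zc xa by (simp add: m_assoc)
      also have "\<dots> = x \<otimes> z \<otimes> a" using a xc zc za by (simp add: m_assoc)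
      finally show ?thesis .
    qed
    thus "x \<otimes> z \<in> centralizer G a" using xc zc unfolding centralizer_def by auto
  qed
qed

lemma conjclass_hom:
  assumes gh: "group_hom G H h" and surj: "h ` carrier G = carrier H" and x: "x \<in> carrier G"
  shows "conjclass H (h x) = h ` conjclass G x"
proof -
  have key: "h (inv\<^bsub>G\<^esub> g \<otimes>\<^bsub>G\<^esub> x \<otimes>\<^bsub>G\<^esub> g) = inv\<^bsub>H\<^esub> (h g) \<otimes>\<^bsub>H\<^esub> h x \<otimes>\<^bsub>H\<^esub> h g"
    if g: "g \<in> carrier G" for g
  proof -
    have gG: "group G" using gh group_hom_def by blast
    show ?thesis using g x gG
      by (simp add: group_hom.hom_mult[OF gh] group_hom.hom_inv[OF gh] group.inv_closed monoid.m_closed group.is_monoid)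
  qed
  have "conjclass H (h x) = (\<lambda>y. inv\<^bsub>H\<^esub> y \<otimes>\<^bsub>H\<^esub> h x \<otimes>\<^bsub>H\<^esub> y) ` carrier H"
    unfolding conjclass_def by (simp add: Setcompr_eq_image)
  also have "\<dots> = (\<lambda>y. inv\<^bsub>H\<^esub> y \<otimes>\<^bsub>H\<^esub> h x \<otimes>\<^bsub>H\<^esub> y) ` h ` carrier G"
    using surj by simp
  also have "\<dots> = h ` (\<lambda>g. inv\<^bsub>G\<^esub> g \<otimes>\<^bsub>G\<^esub> x \<otimes>\<^bsub>G\<^esub> g) ` carrier G"
    unfolding image_image using key by (intro image_cong) auto
  also have "(\<lambda>g. inv\<^bsub>G\<^esub> g \<otimes>\<^bsub>G\<^esub> x \<otimes>\<^bsub>G\<^esub> g) ` carrier G = conjclass G x"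
    unfolding conjclass_def by (simp add: Setcompr_eq_image)
  finally show ?thesis .
qed



lemma conjclass_sub:
  fixes G :: "('a, 'b) monoid_scheme" (structure)
  assumes "group G" "x \<in> carrier G"
  shows "conjclass G x \<subseteq> carrier G"
proof -
  interpret group G by fact
  show ?thesis using assms(2) unfolding conjclass_def by auto
qed

lemma conjclass_self:
  fixes G :: "('a, 'b) monoid_scheme" (structure)
  assumes "group G" "x \<in> carrier G"
  shows "x \<in> conjclass G x"
proof -
  interpret group G by fact
  have "x = inv \<one> \<otimes> x \<otimes> \<one>" using assms(2) by simp
  thus ?thesis unfolding conjclass_def by blast
qed

lemma conjclass_one:
  fixes G :: "('a, 'b) monoid_scheme" (structure)
  assumes "group G"
  shows "conjclass G \<one> = {\<one>}"
proof -
  interpret group G by fact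
  have "conjclass G \<one> \<subseteq> {\<one>}" unfolding conjclass_def by auto
  moreover have "\<one> \<in> conjclass G \<one>" using conjclass_self[OF assms] by simp
  ultimately show ?thesis by blast
qed

lemma comm_iff:
  fixes G :: "('a, 'b) monoid_scheme" (structure)
  assumes "group G" "N \<lhd> G" "a \<in> carrier G" "c \<in> carrier G"
  shows "(N #> (a \<otimes> c) = N #> (c \<otimes> a)) \<longleftrightarrow> commutator G a c \<in> N"
proof -
  interpret normal N G by fact
  note ac = assms(3,4)
  have nc: "\<forall>x\<in>carrier G. \<forall>h\<in>N. x \<otimes> h \<otimes> inv x \<in> N"
    using normal_inv_iff assms(2) by blast
  let ?h = "(a \<otimes> c) \<otimes> inv (c \<otimes> a)"
  let ?k = "commutator G a c"
  let ?x = "inv a \<otimes> inv c"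
  have hc: "?h \<in> carrier G" using ac by simp
  have kc: "?k \<in> carrier G" using ac unfolding commutator_def by simp
  have xc: "?x \<in> carrier G" using ac by simp
  have e1: "?k = ?x \<otimes> ?h \<otimes> inv ?x" using ac unfolding commutator_def
    by (simp add: inv_mult_group m_assoc grp_cancel[OF is_group])
  have e2: "?h = inv ?x \<otimes> ?k \<otimes> inv (inv ?x)" using ac unfolding commutator_def
    by (simp add: inv_mult_group m_assoc grp_cancel[OF is_group])
  have "(N #> (a \<otimes> c) = N #> (c \<otimes> a)) \<longleftrightarrow> a \<otimes> c \<in> N #> (c \<otimes> a)"
    using ac repr_independence[of "a \<otimes> c" N "c \<otimes> a"] repr_independenceD[of N "a \<otimes> c" "c \<otimes> a"] subgroup_axioms
    by auto
  also have "\<dots> \<longleftrightarrow> ?h \<in> N" using rcos_module[of "c \<otimes> a" "a \<otimes> c"] ac is_group by simp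
  also have "\<dots> \<longleftrightarrow> ?k \<in> N"
  proof
    assume "?h \<in> N" thus "?k \<in> N" using e1 nc xc by metis
  next
    assume "?k \<in> N" thus "?h \<in> N" using e2 nc xc inv_closed by metis
  qed
  finally show ?thesis .
qed



lemma comm_trivial:
  fixes G :: "('a, 'b) monoid_scheme" (structure)
  assumes grp: "group G" and fin: "finite (carrier G)" and nN: "N \<lhd> G"
    and aG: "a \<in> carrier G"
    and eta: "eta_count (G Mod N) (conjclass (G Mod N) (N #>\<^bsub>G\<^esub> a)
            <#>\<^bsub>G Mod N\<^esub> conjclass (G Mod N) (inv\<^bsub>G Mod N\<^esub> (N #>\<^bsub>G\<^esub> a)))
         = eta_count G (conjclass G a <#>\<^bsub>G\<^esub> conjclass G (inv\<^bsub>G\<^esub> a))"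
    and gG: "g \<in> carrier G" and cN: "commutator G a g \<in> N"
  shows "a \<otimes> g = g \<otimes> a"
proof -
  interpret normal N G by fact
  define Q where "Q = G Mod N"
  define prj where "prj = (\<lambda>x. N #> x)"
  have gQ: "group Q" unfolding Q_def by (rule factorgroup_is_group)
  have gh: "group_hom G Q prj" unfolding Q_def prj_def
    using r_coset_hom_Mod is_group factorgroup_is_group
    by (simp add: group_hom_def group_hom_axioms_def)
  have surj: "prj ` carrier G = carrier Q" unfolding Q_def prj_def by (simp add: carrier_FactGroup)
  define S where "S = conjclass G a <#> conjclass G (inv a)"
  have ca: "conjclass G a \<subseteq> carrier G" using conjclass_sub[OF grp aG] .
  have cia: "conjclass G (inv a) \<subseteq> carrier G" using conjclass_sub[OF grp] aG by simp
  have Ssub: "S \<subseteq> carrier G" unfolding S_def set_mult_def using ca cia by auto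
  have SQ: "conjclass Q (prj a) <#>\<^bsub>Q\<^esub> conjclass Q (inv\<^bsub>Q\<^esub> (prj a)) = prj ` S"
  proof -
    have "inv\<^bsub>Q\<^esub> (prj a) = prj (inv a)" using group_hom.hom_inv[OF gh aG] by simp
    hence "conjclass Q (prj a) <#>\<^bsub>Q\<^esub> conjclass Q (inv\<^bsub>Q\<^esub> (prj a))
        = prj ` conjclass G a <#>\<^bsub>Q\<^esub> prj ` conjclass G (inv a)"
      using conjclass_hom[OF gh surj] aG by simp
    also have "\<dots> = prj ` S" unfolding S_def
      using set_mult_hom[of prj G Q, OF _ ca cia] gh by (simp add: group_hom_def group_hom_axioms_def)
    finally show ?thesis .
  qed
  define A where "A = (\<lambda>x. conjclass G x) ` S"
  have AB: "(\<lambda>y. conjclass Q y) ` (prj ` S) = (\<lambda>Z. prj ` Z) ` A"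
  proof -
    have "(\<lambda>y. conjclass Q y) ` (prj ` S) = (\<lambda>x. conjclass Q (prj x)) ` S" by (simp add: image_image)
    also have "\<dots> = (\<lambda>x. prj ` conjclass G x) ` S"
      using conjclass_hom[OF gh surj] Ssub by (intro image_cong) auto
    also have "\<dots> = (\<lambda>Z. prj ` Z) ` A" unfolding A_def by blast
    finally show ?thesis .
  qed
  have cardeq: "card ((\<lambda>Z. prj ` Z) ` A) = card A"
    using eta SQ AB unfolding eta_count_def Q_def[symmetric] prj_def[symmetric] S_def[symmetric] A_def
    by (simp add: Setcompr_eq_image)
  have finA: "finite A"
  proof -
    have "A \<subseteq> Pow (carrier G)" unfolding A_def using conjclass_sub[OF grp] Ssub by blast
    thus ?thesis using fin finite_subset by blast
  qed
  have inj: "inj_on (\<lambda>Z. prj ` Z) A" using eq_card_imp_inj_on[OF finA cardeq] .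
  define c where "c = commutator G a g"
  have cc: "c \<in> carrier G" unfolding c_def commutator_def using aG gG by simp
  have cS: "c \<in> S"
  proof -
    let ?u = "inv (g \<otimes> a) \<otimes> a \<otimes> (g \<otimes> a)"
    let ?v = "inv \<one> \<otimes> inv a \<otimes> \<one>"
    have u: "?u \<in> conjclass G a" unfolding conjclass_def using aG gG by blast
    have v: "?v \<in> conjclass G (inv a)" unfolding conjclass_def by blast
    have "c = ?u \<otimes> ?v" unfolding c_def commutator_def using aG gG
      by (simp add: inv_mult_group m_assoc grp_cancel[OF is_group])
    thus ?thesis unfolding S_def set_mult_def using u v by blast
  qed
  have oS: "\<one> \<in> S"
  proof -
    have u: "a \<in> conjclass G a" using conjclass_self[OF grp aG] .
    have v: "inv a \<in> conjclass G (inv a)" using conjclass_self[OF grp] aG by simp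
    have "\<one> = a \<otimes> inv a" using aG by simp
    thus ?thesis unfolding S_def set_mult_def using u v by blast
  qed
  have cA: "conjclass G c \<in> A" unfolding A_def using cS by blast
  have oA: "conjclass G \<one> \<in> A" unfolding A_def using oS by blast
  have piN: "prj y = N" if "y \<in> N" for y unfolding prj_def using rcos_const[OF is_group that] .
  have ccN: "conjclass G c \<subseteq> N"
  proof
    fix y assume "y \<in> conjclass G c"
    then obtain h where h: "h \<in> carrier G" "y = inv h \<otimes> c \<otimes> h" unfolding conjclass_def by blast
    have "inv h \<otimes> c \<otimes> inv (inv h) \<in> N"
      using normal_inv_iff nN h(1) cN c_def by (meson inv_closed)
    thus "y \<in> N" using h by simp
  qed
  have i1: "prj ` conjclass G c = {N}"
    using ccN piN conjclass_self[OF grp cc] by blast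
  have i2: "prj ` conjclass G \<one> = {N}"
    using conjclass_one[OF grp] piN one_closed by simp
  have "conjclass G c = conjclass G \<one>"
    using inj cA oA i1 i2 unfolding inj_on_def by metis
  hence c1: "c = \<one>" using conjclass_self[OF grp cc] conjclass_one[OF grp] by simp
  have "inv (a \<otimes> g) = inv a \<otimes> inv g"
    using c1 unfolding c_def commutator_def using aG gG
    by (intro inv_equality) (simp_all add: m_assoc)
  also have "\<dots> = inv (g \<otimes> a)" using aG gG by (simp add: inv_mult_group)
  finally have "inv (inv (a \<otimes> g)) = inv (inv (g \<otimes> a))" by simp
  thus ?thesis using aG gG by simp
qed



lemma comm_one:
  fixes G :: "('a, 'b) monoid_scheme" (structure)
  assumes grp: "group G" and aG: "a \<in> carrier G" and gG: "g \<in> carrier G" and ag: "a \<otimes> g = g \<otimes> a"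
  shows "commutator G a g = \<one>"
proof -
  interpret group G by fact
  have "commutator G a g = inv a \<otimes> (inv g \<otimes> (a \<otimes> g))" unfolding commutator_def
    using aG gG by (simp add: m_assoc)
  also have "\<dots> = inv a \<otimes> (inv g \<otimes> (g \<otimes> a))" using ag by simp
  also have "\<dots> = \<one>" using aG gG by (simp add: grp_cancel[OF grp])
  finally show ?thesis .
qed

lemma part3:
  fixes G :: "('a, 'b) monoid_scheme" (structure)
  assumes grp: "group G" and nN: "N \<lhd> G" and aG: "a \<in> carrier G"
    and cen: "centralizer G a = {g \<in> carrier G. commutator G a g \<in> N}"
  shows "derived_length (G Mod core G (centralizer G a))
      = derived_length ((G Mod N) Mod core (G Mod N) (centralizer (G Mod N) (N #>\<^bsub>G\<^esub> a)))"
proof -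
  interpret normal N G by fact
  define Q where "Q = G Mod N"
  define prj where "prj = (\<lambda>x. N #> x)"
  have gQ: "group Q" unfolding Q_def by (rule factorgroup_is_group)
  have prjhom: "prj \<in> hom G Q" unfolding Q_def prj_def using r_coset_hom_Mod .
  have gh: "group_hom G Q prj"
    using prjhom is_group gQ by (simp add: group_hom_def group_hom_axioms_def)
  have surj: "prj ` carrier G = carrier Q" unfolding Q_def prj_def by (simp add: carrier_FactGroup)
  have paQ: "prj a \<in> carrier Q" using aG surj by blast
  define CQ where "CQ = centralizer Q (prj a)"
  have CQsg: "subgroup CQ Q" unfolding CQ_def using centralizer_subgroup[OF gQ paQ] .
  have CQsub: "CQ \<subseteq> carrier Q" using CQsg subgroup.subset by blast
  define L where "L = core Q CQ"
  have Ln: "L \<lhd> Q" unfolding L_def using core_normal[OF gQ CQsg] .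
  have Lsg: "subgroup L Q" using Ln normal_imp_subgroup by blast
  have gQL: "group (Q Mod L)" using normal.factorgroup_is_group[OF Ln] .
  define psi where "psi = (\<lambda>Z. L #>\<^bsub>Q\<^esub> Z)"
  have psihom: "psi \<in> hom Q (Q Mod L)" unfolding psi_def using normal.r_coset_hom_Mod[OF Ln] .
  define h where "h = psi \<circ> prj"
  have hhom: "h \<in> hom G (Q Mod L)" unfolding h_def using Group.hom_compose[OF prjhom psihom] .
  have ghh: "group_hom G (Q Mod L) h"
    using hhom is_group gQL by (simp add: group_hom_def group_hom_axioms_def)
  have hsurj: "h ` carrier G = carrier (Q Mod L)"
    unfolding h_def image_comp[symmetric] surj psi_def by (simp add: carrier_FactGroup)
  have inCQ: "prj c \<in> CQ \<longleftrightarrow> c \<in> centralizer G a" if c: "c \<in> carrier G" for c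
  proof -
    have pc: "prj c \<in> carrier Q" using c surj by blast
    have "prj c \<in> CQ \<longleftrightarrow> prj a \<otimes>\<^bsub>Q\<^esub> prj c = prj c \<otimes>\<^bsub>Q\<^esub> prj a"
      unfolding CQ_def centralizer_def using pc by simp
    also have "\<dots> \<longleftrightarrow> prj (a \<otimes> c) = prj (c \<otimes> a)"
      using group_hom.hom_mult[OF gh] aG c by simp
    also have "\<dots> \<longleftrightarrow> commutator G a c \<in> N"
      unfolding prj_def using comm_iff[OF grp nN aG c] .
    also have "\<dots> \<longleftrightarrow> c \<in> centralizer G a" using cen c by simp
    finally show ?thesis .
  qed
  have ker: "kernel G (Q Mod L) h = core G (centralizer G a)"
  proof -
    have Csub: "centralizer G a \<subseteq> carrier G" unfolding centralizer_def by auto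
    have "g \<in> kernel G (Q Mod L) h \<longleftrightarrow> g \<in> core G (centralizer G a)" if g: "g \<in> carrier G" for g
    proof -
      have pg: "prj g \<in> carrier Q" using g surj by blast
      have "g \<in> kernel G (Q Mod L) h \<longleftrightarrow> L #>\<^bsub>Q\<^esub> prj g = L"
        unfolding kernel_def h_def psi_def using g by simp
      also have "\<dots> \<longleftrightarrow> prj g \<in> L"
        using group.coset_join1[OF gQ _ pg Lsg] group.coset_join2[OF gQ pg Lsg] by blast
      also have "\<dots> \<longleftrightarrow> (\<forall>y\<in>carrier Q. y \<otimes>\<^bsub>Q\<^esub> prj g \<otimes>\<^bsub>Q\<^esub> inv\<^bsub>Q\<^esub> y \<in> CQ)"
        unfolding L_def using core_mem[OF gQ CQsub pg] .
      also have "\<dots> \<longleftrightarrow> (\<forall>x\<in>carrier G. prj (x \<otimes> g \<otimes> inv x) \<in> CQ)"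
      proof -
        have e: "prj x \<otimes>\<^bsub>Q\<^esub> prj g \<otimes>\<^bsub>Q\<^esub> inv\<^bsub>Q\<^esub> (prj x) = prj (x \<otimes> g \<otimes> inv x)"
          if x: "x \<in> carrier G" for x
          using group_hom.hom_mult[OF gh] group_hom.hom_inv[OF gh] x g by simp
        show ?thesis
        proof
          assume "\<forall>y\<in>carrier Q. y \<otimes>\<^bsub>Q\<^esub> prj g \<otimes>\<^bsub>Q\<^esub> inv\<^bsub>Q\<^esub> y \<in> CQ"
          thus "\<forall>x\<in>carrier G. prj (x \<otimes> g \<otimes> inv x) \<in> CQ" using e surj by (metis imageI)
        next
          assume a1: "\<forall>x\<in>carrier G. prj (x \<otimes> g \<otimes> inv x) \<in> CQ"
          show "\<forall>y\<in>carrier Q. y \<otimes>\<^bsub>Q\<^esub> prj g \<otimes>\<^bsub>Q\<^esub> inv\<^bsub>Q\<^esub> y \<in> CQ"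
          proof
            fix y assume "y \<in> carrier Q"
            then obtain x where x: "x \<in> carrier G" "y = prj x" using surj by blast
            show "y \<otimes>\<^bsub>Q\<^esub> prj g \<otimes>\<^bsub>Q\<^esub> inv\<^bsub>Q\<^esub> y \<in> CQ" using e[OF x(1)] a1 x by simp
          qed
        qed
      qed
      also have "\<dots> \<longleftrightarrow> (\<forall>x\<in>carrier G. x \<otimes> g \<otimes> inv x \<in> centralizer G a)"
        using inCQ g by simp
      also have "\<dots> \<longleftrightarrow> g \<in> core G (centralizer G a)"
        using core_mem[OF grp Csub g] by simp
      finally show ?thesis .
    qed
    moreover have "kernel G (Q Mod L) h \<subseteq> carrier G" unfolding kernel_def by auto
    moreover have "core G (centralizer G a) \<subseteq> carrier G" using core_sub[OF grp Csub] .
    ultimately show ?thesis by blast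
  qed
  have iso: "(\<lambda>Z. the_elem (h ` Z)) \<in> iso (G Mod core G (centralizer G a)) (Q Mod L)"
    using group_hom.FactGroup_iso_set[OF ghh hsurj] ker by simp
  have gK: "group (G Mod core G (centralizer G a))"
    using normal.factorgroup_is_group[OF core_normal[OF grp centralizer_subgroup[OF grp aG]]] .
  have "derived_length (G Mod core G (centralizer G a)) = derived_length (Q Mod L)"
    using dl_iso[OF gK gQL iso] .
  thus ?thesis unfolding L_def CQ_def Q_def prj_def .
qed

lemma N_sub_cen:
  fixes G :: "('a, 'b) monoid_scheme" (structure)
  assumes grp: "group G" and nN: "N \<lhd> G" and aG: "a \<in> carrier G"
    and cen: "centralizer G a = {g \<in> carrier G. commutator G a g \<in> N}"
  shows "N \<subseteq> centralizer G a"
proof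
  fix n assume n: "n \<in> N"
  interpret normal N G by (rule nN)
  have nc: "n \<in> carrier G" using n subset by blast
  have "inv a \<otimes> inv n \<otimes> inv (inv a) \<in> N"
    using normal_inv_iff nN n aG by (meson inv_closed m_inv_closed)
  hence "(inv a \<otimes> inv n \<otimes> a) \<otimes> n \<in> N" using aG n m_closed by simp
  hence "commutator G a n \<in> N" unfolding commutator_def .
  thus "n \<in> centralizer G a" using cen nc by simp
qed

theorem lemma4p5:
  fixes G :: "('a, 'b) monoid_scheme" and N :: "'a set" and a :: 'a
  assumes "group G" and "finite (carrier G)" and "solvable G"
    and "minimal_normal N G"
    and "a \<in> carrier G"
    and "eta_count (G Mod N) (conjclass (G Mod N) (N #>\<^bsub>G\<^esub> a)
            <#>\<^bsub>G Mod N\<^esub> conjclass (G Mod N) (inv\<^bsub>G Mod N\<^esub> (N #>\<^bsub>G\<^esub> a)))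
         = eta_count G (conjclass G a <#>\<^bsub>G\<^esub> conjclass G (inv\<^bsub>G\<^esub> a))"
  shows "N \<subseteq> centralizer G a
    \<and> centralizer G a = {g \<in> carrier G. commutator G a g \<in> N}
    \<and> derived_length (G Mod core G (centralizer G a))
      = derived_length ((G Mod N) Mod core (G Mod N) (centralizer (G Mod N) (N #>\<^bsub>G\<^esub> a)))"
proof -
  have nN: "N \<lhd> G" using assms(4) unfolding minimal_normal_def by blast
  have cen: "centralizer G a = {g \<in> carrier G. commutator G a g \<in> N}"
  proof
    show "centralizer G a \<subseteq> {g \<in> carrier G. commutator G a g \<in> N}"
    proof
      fix g assume "g \<in> centralizer G a"
      hence g: "g \<in> carrier G" and ag: "a \<otimes>\<^bsub>G\<^esub> g = g \<otimes>\<^bsub>G\<^esub> a" unfolding centralizer_def by auto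
      have "commutator G a g = \<one>\<^bsub>G\<^esub>" using comm_one[OF assms(1) assms(5) g ag] .
      thus "g \<in> {g \<in> carrier G. commutator G a g \<in> N}"
        using g subgroup.one_closed[OF normal_imp_subgroup[OF nN]] by simp
    qed
  next
    show "{g \<in> carrier G. commutator G a g \<in> N} \<subseteq> centralizer G a"
      using comm_trivial[OF assms(1,2) nN assms(5,6)] unfolding centralizer_def by blast
  qed
  have sub: "N \<subseteq> centralizer G a" using N_sub_cen[OF assms(1) nN assms(5) cen] .
  show ?thesis using sub cen part3[OF assms(1) nN assms(5) cen] by blast
qed


end
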